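(* Let $k\geq 0$ be an integer and $M_{k}(n)=\frac{1+(-1)^{k}k!(n-k-1)!}{n}$ for $n\ge k+1$, $M^+_k(n)=(-1)^kM_k(n)$. For $0<\lvert x\rvert<1$, \[ \sum_{n=0}^{\infty}M_{k}(n+k+1)\frac{x^{n}}{n!}=(-1)^{k}\left(k!\,\Phi(x,1,k+1)-\frac{\gamma(k+1,-x)}{x^{k+1}}\right), \] and \[ \sum_{n=0}^{\infty}M^{+}_{k}(n+k+1)\frac{x^{n}}{n!}=k!\,\Phi(x,1,k+1)-\frac{\gamma(k+1,-x)}{x^{k+1}}. \]
   Context: $\Phi(x,s,a)=\sum_{n=0}^{\infty}\frac{x^{n}}{(n+a)^{s}}$ is the Lerch transcendent, and $\gamma(a,z)=z^{a}\sum_{n=0}^{\infty}\frac{(-z)^{n}}{n!(n+a)}$ is the lower incomplete gamma function. *)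

theory Defs
  imports Complex_Main
begin

definition lerch_phi :: "real \<Rightarrow> real \<Rightarrow> real \<Rightarrow> real" where
  "lerch_phi x s a = (\<Sum>n. x ^ n / (real n + a) powr s)"

text \<open>Lower incomplete gamma function gamma(a,z) = z^a sum_{n>=0} (-z)^n/(n! (n+a)),
  for a positive integer parameter a (the only case needed).\<close>
definition lower_gamma :: "nat \<Rightarrow> real \<Rightarrow> real" where
  "lower_gamma a z = z ^ a * (\<Sum>n. (- z) ^ n / (fact n * (real n + real a)))"

text \<open>M_k(n) = (1 + (-1)^k k! (n-k-1)!)/n, meaningful for n >= k+1.\<close>
definition M :: "nat \<Rightarrow> nat \<Rightarrow> real" where
  "M k n = (1 + (-1) ^ k * fact k * fact (n - k - 1)) / real n"

definition Mplus :: "nat \<Rightarrow> nat \<Rightarrow> real" where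
  "Mplus k n = (-1) ^ k * M k n"

end

theory Submission
  imports Defs
begin

theorem mainTheorem13:
  fixes k :: nat and x :: real
  assumes "0 < \<bar>x\<bar>" and "\<bar>x\<bar> < 1"
  shows "(\<lambda>n. M k (n + k + 1) * x ^ n / fact n) sums
           ((-1) ^ k * (fact k * lerch_phi x 1 (real k + 1)
              - lower_gamma (k + 1) (- x) / x ^ (k + 1)))
       \<and> (\<lambda>n. Mplus k (n + k + 1) * x ^ n / fact n) sums
           (fact k * lerch_phi x 1 (real k + 1)
              - lower_gamma (k + 1) (- x) / x ^ (k + 1))"
proof -
  have x0: "x \<noteq> 0" using assms by auto
  have geo: "summable (\<lambda>n. \<bar>x\<bar> ^ n)"
    using assms by (intro summable_geometric) auto
  define f where "f n = x ^ n / (real n + real k + 1)" for n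
  define g where "g n = x ^ n / (fact n * (real n + real k + 1))" for n
  have sf: "summable f"
  proof (rule summable_comparison_test'[OF geo])
    fix n :: nat
    have "norm (f n) = \<bar>x\<bar> ^ n / (real n + real k + 1)"
      by (simp add: f_def abs_divide power_abs)
    also have "\<dots> \<le> \<bar>x\<bar> ^ n" by (simp add: divide_le_eq mult_le_cancel_left1)
    finally show "norm (f n) \<le> \<bar>x\<bar> ^ n" .
  qed
  have sg: "summable g"
  proof (rule summable_comparison_test'[OF geo])
    fix n :: nat
    have "norm (g n) = \<bar>x\<bar> ^ n / (fact n * (real n + real k + 1))"
      by (simp add: g_def abs_divide power_abs abs_mult)
    also have "\<dots> \<le> \<bar>x\<bar> ^ n"
    proof -
      have "1 \<le> fact n * (real n + real k + 1)"
      proof -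
        have a: "1 \<le> (fact n::real)" by (rule fact_ge_1)
        have b: "1 \<le> real n + real k + 1" by simp
        have "(1::real) * 1 \<le> fact n * (real n + real k + 1)"
          by (rule mult_mono[OF a b]) auto
        thus ?thesis by simp
      qed
      thus ?thesis by (simp add: divide_le_eq mult_le_cancel_left1)
    qed
    finally show "norm (g n) \<le> \<bar>x\<bar> ^ n" .
  qed
  have phi: "lerch_phi x 1 (real k + 1) = suminf f"
    unfolding lerch_phi_def f_def
    by (rule arg_cong[where f=suminf]) (simp add: fun_eq_iff add.assoc)
  have gam: "lower_gamma (k + 1) (- x) = (- x) ^ (k + 1) * suminf g"
  proof -
    have "(\<lambda>n. (- (- x)) ^ n / (fact n * (real n + real (k + 1)))) = g"
      by (rule ext) (simp add: g_def algebra_simps)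
    thus ?thesis unfolding lower_gamma_def by (simp only:)
  qed
  have gx: "lower_gamma (k + 1) (- x) / x ^ (k + 1) = (-1) ^ (k + 1) * suminf g"
  proof -
    have "(- x) ^ (k + 1) = (-1) ^ (k + 1) * x ^ (k + 1)"
      by (rule power_minus)
    then show ?thesis using x0 unfolding gam by simp
  qed
  have Mterm: "M k (n + k + 1) * x ^ n / fact n = g n + ((-1) ^ k * fact k) * f n" for n
  proof -
    have nn: "n + k + 1 - k - 1 = n" by simp
    have fn: "(fact n::real) \<noteq> 0" by simp
    have pn: "real (n + k + 1) = real n + real k + 1" by simp
    define c where "c = ((-1::real) ^ k * fact k)"
    define d where "d = real n + real k + 1"
    have d0: "d \<noteq> 0" unfolding d_def by simp
    have "M k (n + k + 1) * x ^ n / fact n = (1 + c * fact n) / d * x ^ n / fact n"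
      unfolding M_def nn pn c_def d_def by (simp add: mult.assoc)
    also have "\<dots> = x ^ n / (fact n * d) + c * (x ^ n / d)"
      using fn d0 by (simp add: field_simps)
    finally show ?thesis unfolding f_def g_def c_def d_def by simp
  qed
  have s1: "(\<lambda>n. M k (n + k + 1) * x ^ n / fact n) sums (suminf g + ((-1) ^ k * fact k) * suminf f)"
    unfolding Mterm
    by (intro sums_add sums_mult summable_sums sf sg)
  have v1: "suminf g + ((-1) ^ k * fact k) * suminf f =
      (-1) ^ k * (fact k * lerch_phi x 1 (real k + 1)
              - lower_gamma (k + 1) (- x) / x ^ (k + 1))"
  proof -
    have e: "(-1::real)^k*(-1)^k = 1"
      by (simp flip: power_add)
    show ?thesis unfolding gx phi using e by (simp add: algebra_simps)
  qed
  have A: "(\<lambda>n. M k (n + k + 1) * x ^ n / fact n) sums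
           ((-1) ^ k * (fact k * lerch_phi x 1 (real k + 1)
              - lower_gamma (k + 1) (- x) / x ^ (k + 1)))"
    using s1 v1 by simp
  have B0: "(\<lambda>n. (-1) ^ k * (M k (n + k + 1) * x ^ n / fact n)) sums
      ((-1) ^ k * ((-1) ^ k * (fact k * lerch_phi x 1 (real k + 1)
              - lower_gamma (k + 1) (- x) / x ^ (k + 1))))"
    by (rule sums_mult[OF A])
  have B: "(\<lambda>n. Mplus k (n + k + 1) * x ^ n / fact n) sums
           (fact k * lerch_phi x 1 (real k + 1)
              - lower_gamma (k + 1) (- x) / x ^ (k + 1))"
  proof -
    have e: "(-1::real)^k*(-1)^k = 1"
      by (simp flip: power_add)
    have "(\<lambda>n. (-1) ^ k * (M k (n + k + 1) * x ^ n / fact n)) = (\<lambda>n. Mplus k (n + k + 1) * x ^ n / fact n)"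
      by (simp add: Mplus_def fun_eq_iff)
    moreover have "(-1) ^ k * ((-1) ^ k * (fact k * lerch_phi x 1 (real k + 1)
              - lower_gamma (k + 1) (- x) / x ^ (k + 1))) = (fact k * lerch_phi x 1 (real k + 1)
              - lower_gamma (k + 1) (- x) / x ^ (k + 1))"
      by (simp add: mult.assoc[symmetric] e)
    ultimately show ?thesis using B0 by simp
  qed
  show ?thesis using A B by blast
qed

end
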